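(* Let $(X,\le)$ be a poset, $E$ an equivalence relation on $X$ with ${\le}\subseteq E$, and $\alpha:X\to X$ an order automorphism of $(X,\le)$ with $\alpha\subseteq E$. (i) If $0=\alpha\circ({\le}^c)^\smile=({\le}^c)^\smile\circ\alpha$, then $\langle\mathsf{Up}(\mathbf E),\cap,\cup,\circ,\le,0,{\sim},-\rangle$ is a distributive InFL-algebra. (ii) For a positive integer $n$, the algebra in (i) is $n$-periodic if and only if $|\alpha|=n$.
   Context: For binary relations: converse $R^\smile=\{(x,y)\mid(y,x)\in R\}$; composition $R\circ S=\{(x,y)\mid\exists z\,((x,z)\in R,(z,y)\in S)\}$. A function $\alpha$ is identified with its graph; $\alpha^0=\mathrm{id}_X$, $\alpha^{k+1}=\alpha^k\circ\alpha$, and the order $|\alpha|$ is the smallest positive integer $k$ with $\alpha^k=\mathrm{id}_X$. For a poset $(X,\le)$ and an equivalence relation $E\supseteq{\le}$, $E$ is partially ordered by $(u,v)\preceq(x,y)$ iff $x\le u$ and $v\le y$; $\mathbf E=(E,\preceq)$ and $\mathsf{Up}(\mathbf E)$ is its set of up-sets (a distributive lattice under $\cap,\cup$; it is closed under $\circ$ with identity $\le$). For $R\subseteq E$, $R^c=E\setminus R$. Residuals: $R\backslash S=(R^\smile\circ S^c)^c$, $R/S=(R^c\circ S^\smile)^c$; ${\sim}R=R\backslash 0$, $-R=0/R$. An FL-algebra is a residuated lattice with an extra constant $0$; it is InFL if ${\sim}{-}a={-}{\sim}a=a$ for all $a$; it is $n$-periodic if $n$ is the smallest positive integer with ${\sim}^na=-^na$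 for all $a$. An order automorphism is a bijection $\alpha$ with $x\le y\iff\alpha(x)\le\alpha(y)$. *)

theory Defs
  imports Main
begin

definition relc :: "('a \<times> 'a) set \<Rightarrow> ('a \<times> 'a) set \<Rightarrow> ('a \<times> 'a) set" where
  "relc E R = E - R"

definition ldivE :: "('a \<times> 'a) set \<Rightarrow> ('a \<times> 'a) set \<Rightarrow> ('a \<times> 'a) set \<Rightarrow> ('a \<times> 'a) set" where
  "ldivE E R S = relc E (converse R O relc E S)"

definition rdivE :: "('a \<times> 'a) set \<Rightarrow> ('a \<times> 'a) set \<Rightarrow> ('a \<times> 'a) set \<Rightarrow> ('a \<times> 'a) set" where
  "rdivE E R S = relc E (relc E R O converse S)"

definition prec :: "('a \<times> 'a) set \<Rightarrow> 'a \<times> 'a \<Rightarrow> 'a \<times> 'a \<Rightarrow> bool" where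
  "prec le p q \<longleftrightarrow> (fst q, fst p) \<in> le \<and> (snd p, snd q) \<in> le"

definition UpE :: "('a \<times> 'a) set \<Rightarrow> ('a \<times> 'a) set \<Rightarrow> ('a \<times> 'a) set set" where
  "UpE le E = {U. U \<subseteq> E \<and> (\<forall>p\<in>U. \<forall>q\<in>E. prec le p q \<longrightarrow> q \<in> U)}"

definition graph_on :: "'a set \<Rightarrow> ('a \<Rightarrow> 'a) \<Rightarrow> ('a \<times> 'a) set" where
  "graph_on X f = {(x, f x) | x. x \<in> X}"

definition order_automorphism :: "'a set \<Rightarrow> ('a \<times> 'a) set \<Rightarrow> ('a \<Rightarrow> 'a) \<Rightarrow> bool" where
  "order_automorphism X le f \<longleftrightarrow> bij_betw f X X \<and>
     (\<forall>x\<in>X. \<forall>y\<in>X. (x, y) \<in> le \<longleftrightarrow> (f x, f y) \<in> le)"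

definition perm_order_is :: "'a set \<Rightarrow> ('a \<Rightarrow> 'a) \<Rightarrow> nat \<Rightarrow> bool" where
  "perm_order_is X f n \<longleftrightarrow> 0 < n \<and> graph_on X (f ^^ n) = Id_on X \<and>
     (\<forall>k. 0 < k \<and> k < n \<longrightarrow> graph_on X (f ^^ k) \<noteq> Id_on X)"

text \<open>FL-algebra on a carrier A: lattice (order x \<le> y iff meet x y = x), monoid (mult, e),
  residuals ldiv, rdiv (a\<cdot>b \<le> c iff b \<le> a\<setminus>c iff a \<le> c/b), extra constant zero.\<close>
definition fl_algebra ::
  "'b set \<Rightarrow> ('b \<Rightarrow> 'b \<Rightarrow> 'b) \<Rightarrow> ('b \<Rightarrow> 'b \<Rightarrow> 'b) \<Rightarrow> ('b \<Rightarrow> 'b \<Rightarrow> 'b) \<Rightarrow> 'b \<Rightarrow> 'b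
     \<Rightarrow> ('b \<Rightarrow> 'b \<Rightarrow> 'b) \<Rightarrow> ('b \<Rightarrow> 'b \<Rightarrow> 'b) \<Rightarrow> bool" where
  "fl_algebra A meet join mult e zero ldiv rdiv \<longleftrightarrow>
     e \<in> A \<and> zero \<in> A \<and>
     (\<forall>a\<in>A. \<forall>b\<in>A. meet a b \<in> A \<and> join a b \<in> A \<and> mult a b \<in> A \<and> ldiv a b \<in> A \<and> rdiv a b \<in> A) \<and>
     (\<forall>a\<in>A. \<forall>b\<in>A. meet a b = meet b a \<and> join a b = join b a \<and>
         meet a (join a b) = a \<and> join a (meet a b) = a) \<and>
     (\<forall>a\<in>A. \<forall>b\<in>A. \<forall>c\<in>A. meet a (meet b c) = meet (meet a b) c \<and>
         join a (join b c) = join (join a b) c \<and> mult a (mult b c) = mult (mult a b) c) \<and>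
     (\<forall>a\<in>A. mult e a = a \<and> mult a e = a) \<and>
     (\<forall>a\<in>A. \<forall>b\<in>A. \<forall>c\<in>A.
        (meet (mult a b) c = mult a b \<longleftrightarrow> meet b (ldiv a c) = b) \<and>
        (meet (mult a b) c = mult a b \<longleftrightarrow> meet a (rdiv c b) = a))"

definition distributive_on :: "'b set \<Rightarrow> ('b \<Rightarrow> 'b \<Rightarrow> 'b) \<Rightarrow> ('b \<Rightarrow> 'b \<Rightarrow> 'b) \<Rightarrow> bool" where
  "distributive_on A meet join \<longleftrightarrow>
     (\<forall>a\<in>A. \<forall>b\<in>A. \<forall>c\<in>A. meet a (join b c) = join (meet a b) (meet a c))"

text \<open>InFL: \<sim>a = a\<setminus>0, -a = 0/a, and \<sim>-a = -\<sim>a = a.\<close>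
definition infl_algebra ::
  "'b set \<Rightarrow> ('b \<Rightarrow> 'b \<Rightarrow> 'b) \<Rightarrow> ('b \<Rightarrow> 'b \<Rightarrow> 'b) \<Rightarrow> ('b \<Rightarrow> 'b \<Rightarrow> 'b) \<Rightarrow> 'b \<Rightarrow> 'b
     \<Rightarrow> ('b \<Rightarrow> 'b \<Rightarrow> 'b) \<Rightarrow> ('b \<Rightarrow> 'b \<Rightarrow> 'b) \<Rightarrow> bool" where
  "infl_algebra A meet join mult e zero ldiv rdiv \<longleftrightarrow>
     fl_algebra A meet join mult e zero ldiv rdiv \<and>
     (\<forall>a\<in>A. ldiv (rdiv zero a) zero = a \<and> rdiv zero (ldiv a zero) = a)"

definition n_periodic ::
  "'b set \<Rightarrow> 'b \<Rightarrow> ('b \<Rightarrow> 'b \<Rightarrow> 'b) \<Rightarrow> ('b \<Rightarrow> 'b \<Rightarrow> 'b) \<Rightarrow> nat \<Rightarrow> bool" where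
  "n_periodic A zero ldiv rdiv n \<longleftrightarrow> 0 < n \<and>
     (\<forall>a\<in>A. ((\<lambda>x. ldiv x zero) ^^ n) a = ((\<lambda>x. rdiv zero x) ^^ n) a) \<and>
     (\<forall>k. 0 < k \<and> k < n \<longrightarrow>
        \<not> (\<forall>a\<in>A. ((\<lambda>x. ldiv x zero) ^^ k) a = ((\<lambda>x. rdiv zero x) ^^ k) a))"

end

theory Submission
  imports Defs
begin

locale stp =
  fixes X :: "'a set" and le E :: "('a \<times> 'a) set" and \<alpha> :: "'a \<Rightarrow> 'a"
  assumes poset: "partial_order_on X le"
    and eqv: "equiv X E"
    and leE: "le \<subseteq> E"
    and aut: "order_automorphism X le \<alpha>"
    and alphaE: "graph_on X \<alpha> \<subseteq> E"
begin

abbreviation "Z \<equiv> graph_on X \<alpha> O converse (relc E le)"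
abbreviation "U \<equiv> UpE le E"

lemma E_X: "(x,y)\<in>E \<Longrightarrow> x\<in>X \<and> y\<in>X"
  using eqv unfolding equiv_def refl_on_def by blast
lemma E_refl: "x\<in>X \<Longrightarrow> (x,x)\<in>E"
  using eqv unfolding equiv_def refl_on_def by blast
lemma E_sym: "(x,y)\<in>E \<Longrightarrow> (y,x)\<in>E"
  using eqv unfolding equiv_def sym_def by blast
lemma E_trans: "(x,y)\<in>E \<Longrightarrow> (y,z)\<in>E \<Longrightarrow> (x,z)\<in>E"
  using eqv unfolding equiv_def trans_def by blast
lemma le_X: "(x,y)\<in>le \<Longrightarrow> x\<in>X \<and> y\<in>X"
  using poset unfolding partial_order_on_def preorder_on_def refl_on_def by blast
lemma le_refl: "x\<in>X \<Longrightarrow> (x,x)\<in>le"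
  using poset unfolding partial_order_on_def preorder_on_def refl_on_def by blast
lemma le_trans: "(x,y)\<in>le \<Longrightarrow> (y,z)\<in>le \<Longrightarrow> (x,z)\<in>le"
  using poset unfolding partial_order_on_def preorder_on_def trans_def by blast
lemma le_antisym: "(x,y)\<in>le \<Longrightarrow> (y,x)\<in>le \<Longrightarrow> x = y"
  using poset unfolding partial_order_on_def antisym_def by blast
lemma le_E: "(x,y)\<in>le \<Longrightarrow> (x,y)\<in>E" using leE by blast
lemma al_X: "x\<in>X \<Longrightarrow> \<alpha> x \<in> X"
  using aut unfolding order_automorphism_def bij_betw_def by blast
lemma al_surj: "y\<in>X \<Longrightarrow> \<exists>x\<in>X. \<alpha> x = y"
  using aut unfolding order_automorphism_def bij_betw_def by (metis imageE)
lemma al_mono: "x\<in>X \<Longrightarrow> y\<in>X \<Longrightarrow> (\<alpha> x, \<alpha> y)\<in>le \<longleftrightarrow> (x,y)\<in>le"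
  using aut unfolding order_automorphism_def by blast
lemma al_E: "x\<in>X \<Longrightarrow> (x,\<alpha> x)\<in>E"
  using alphaE unfolding graph_on_def by blast

lemma Up_sub: "R \<in> U \<Longrightarrow> R \<subseteq> E" unfolding UpE_def by blast
lemma UpD: "R \<in> U \<Longrightarrow> (u,v)\<in>R \<Longrightarrow> (x,u)\<in>le \<Longrightarrow> (v,y)\<in>le \<Longrightarrow> (x,y)\<in>R"
proof -
  assume a: "R \<in> U" "(u,v)\<in>R" "(x,u)\<in>le" "(v,y)\<in>le"
  have "(x,y)\<in>E" using a Up_sub[OF a(1)] le_E E_trans by blast
  then show ?thesis using a unfolding UpE_def prec_def by auto
qed
lemma UpI: "R \<subseteq> E \<Longrightarrow> (\<And>u v x y. (u,v)\<in>R \<Longrightarrow> (x,u)\<in>le \<Longrightarrow> (v,y)\<in>le \<Longrightarrow> (x,y)\<in>R) \<Longrightarrow> R \<in> U"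
  unfolding UpE_def prec_def by auto

lemma Z_mem: "(x,y)\<in>E \<Longrightarrow> (x,y)\<in>Z \<longleftrightarrow> (y,\<alpha> x)\<notin>le"
proof -
  assume e: "(x,y)\<in>E"
  hence x: "x\<in>X" using E_X by blast
  have "(y,\<alpha> x)\<in>E" using e al_E[OF x] E_sym E_trans by blast
  then show ?thesis using x unfolding graph_on_def relc_def by auto
qed

lemma Z_sub: "Z \<subseteq> E"
proof
  fix p assume "p \<in> Z"
  then obtain x y where p: "p = (x,y)" "x\<in>X" "(y,\<alpha> x)\<in>E"
    unfolding graph_on_def relc_def by auto
  then show "p\<in>E" using al_E[OF p(2)] E_sym E_trans by blast
qed

lemma Z_Up: "Z \<in> U"
proof (rule UpI[OF Z_sub])
  fix u v x y assume a: "(u,v)\<in>Z" "(x,u)\<in>le" "(v,y)\<in>le"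
  have uv: "(u,v)\<in>E" using a Z_sub by blast
  have xy: "(x,y)\<in>E" using uv a le_E E_trans by blast
  have x: "x\<in>X" and u: "u\<in>X" using a le_X by auto
  have nv: "(v,\<alpha> u)\<notin>le" using Z_mem[OF uv] a by blast
  show "(x,y)\<in>Z"
  proof (subst Z_mem[OF xy], rule notI)
    assume "(y,\<alpha> x)\<in>le"
    moreover have "(\<alpha> x, \<alpha> u)\<in>le" using al_mono[OF x u] a by blast
    ultimately show False using nv a le_trans by blast
  qed
qed

lemma le_Up: "le \<in> U"
  by (rule UpI[OF leE]) (meson le_trans)

lemma comp_Up: "R \<in> U \<Longrightarrow> S \<in> U \<Longrightarrow> R O S \<in> U"
proof (rule UpI)
  assume r: "R \<in> U" and s: "S \<in> U"
  show "R O S \<subseteq> E" using Up_sub[OF r] Up_sub[OF s] E_trans by blast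
  fix u v x y assume a: "(u,v)\<in>R O S" "(x,u)\<in>le" "(v,y)\<in>le"
  then obtain z where z: "(u,z)\<in>R" "(z,v)\<in>S" by blast
  have "(x,z)\<in>R" using UpD[OF r z(1) a(2)] z(1) Up_sub[OF r] E_X le_refl by blast
  moreover have "(z,y)\<in>S" using UpD[OF s z(2) _ a(3)] z(2) Up_sub[OF s] E_X le_refl by blast
  ultimately show "(x,y)\<in>R O S" by blast
qed

lemma le_comp: "R \<in> U \<Longrightarrow> le O R = R"
proof
  assume r: "R \<in> U"
  show "le O R \<subseteq> R" using UpD[OF r] Up_sub[OF r] E_X le_refl by blast
  show "R \<subseteq> le O R"
  proof
    fix p assume "p\<in>R" then obtain x y where "p=(x,y)" "(x,y)\<in>R" by (cases p) auto
    then show "p \<in> le O R" using Up_sub[OF r] E_X le_refl by blast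
  qed
qed

lemma comp_le: "R \<in> U \<Longrightarrow> R O le = R"
proof
  assume r: "R \<in> U"
  show "R O le \<subseteq> R" using UpD[OF r] Up_sub[OF r] E_X le_refl by blast
  show "R \<subseteq> R O le"
  proof
    fix p assume "p\<in>R" then obtain x y where "p=(x,y)" "(x,y)\<in>R" by (cases p) auto
    then show "p \<in> R O le" using Up_sub[OF r] E_X le_refl by blast
  qed
qed

lemma ldiv_Up: "R \<in> U \<Longrightarrow> S \<in> U \<Longrightarrow> ldivE E R S \<in> U"
proof (rule UpI)
  assume r: "R \<in> U" and s: "S \<in> U"
  show "ldivE E R S \<subseteq> E" unfolding ldivE_def relc_def by blast
  fix u v x y assume a: "(u,v)\<in>ldivE E R S" "(x,u)\<in>le" "(v,y)\<in>le"
  have uv: "(u,v)\<in>E" using a unfolding ldivE_def relc_def by blast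
  have xy: "(x,y)\<in>E" using uv a le_E E_trans by blast
  show "(x,y)\<in>ldivE E R S"
  proof (rule ccontr)
    assume "(x,y)\<notin>ldivE E R S"
    then obtain z where z: "(z,x)\<in>R" "(z,y)\<in>E" "(z,y)\<notin>S"
      using xy unfolding ldivE_def relc_def by blast
    have "(z,u)\<in>R" using UpD[OF r z(1) _ a(2)] z Up_sub[OF r] E_X le_refl by blast
    moreover have "(z,v)\<in>E" using z(2) a(3) le_E E_sym E_trans by blast
    moreover have "(z,v)\<notin>S" using UpD[OF s _ _ a(3)] z E_X le_refl by blast
    ultimately show False using a(1) unfolding ldivE_def relc_def by blast
  qed
qed

lemma rdiv_Up: "R \<in> U \<Longrightarrow> S \<in> U \<Longrightarrow> rdivE E R S \<in> U"
proof (rule UpI)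
  assume r: "R \<in> U" and s: "S \<in> U"
  show "rdivE E R S \<subseteq> E" unfolding rdivE_def relc_def by blast
  fix u v x y assume a: "(u,v)\<in>rdivE E R S" "(x,u)\<in>le" "(v,y)\<in>le"
  have uv: "(u,v)\<in>E" using a unfolding rdivE_def relc_def by blast
  have xy: "(x,y)\<in>E" using uv a le_E E_trans by blast
  show "(x,y)\<in>rdivE E R S"
  proof (rule ccontr)
    assume "(x,y)\<notin>rdivE E R S"
    then obtain z where z: "(x,z)\<in>E" "(x,z)\<notin>R" "(y,z)\<in>S"
      using xy unfolding rdivE_def relc_def by blast
    have "(v,z)\<in>S" using UpD[OF s z(3) a(3)] z Up_sub[OF s] E_X le_refl by blast
    moreover have "(u,z)\<in>E" using z(1) a(2) le_E E_sym E_trans by blast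
    moreover have "(u,z)\<notin>R" using UpD[OF r _ a(2)] z E_X le_refl by blast
    ultimately show False using a(1) unfolding rdivE_def relc_def by blast
  qed
qed

lemma res_l: "R \<subseteq> E \<Longrightarrow> S \<subseteq> E \<Longrightarrow> T \<subseteq> E \<Longrightarrow>
   (R O S \<inter> T = R O S) \<longleftrightarrow> (S \<inter> ldivE E R T = S)"
  unfolding ldivE_def relc_def using E_trans by blast

lemma res_r: "R \<subseteq> E \<Longrightarrow> S \<subseteq> E \<Longrightarrow> T \<subseteq> E \<Longrightarrow>
   (R O S \<inter> T = R O S) \<longleftrightarrow> (R \<inter> rdivE E T S = R)"
  unfolding rdivE_def relc_def using E_trans by blast


definition "tn R = ldivE E R Z"
definition "mn R = rdivE E Z R"

lemma tn_Up: "R \<in> U \<Longrightarrow> tn R \<in> U" unfolding tn_def using ldiv_Up Z_Up by blast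
lemma mn_Up: "R \<in> U \<Longrightarrow> mn R \<in> U" unfolding mn_def using rdiv_Up Z_Up by blast

lemma mn_mem: "R \<in> U \<Longrightarrow> (x,y)\<in>E \<Longrightarrow> (x,y) \<in> mn R \<longleftrightarrow> (y,\<alpha> x)\<notin>R"
proof -
  assume r: "R \<in> U" and e: "(x,y)\<in>E"
  have x: "x\<in>X" using e E_X by blast
  have yax: "(y,\<alpha> x)\<in>E" using e al_E[OF x] E_sym E_trans by blast
  have "(x,y)\<in>(E - Z) O converse R \<longleftrightarrow> (y,\<alpha> x)\<in>R"
  proof
    assume "(x,y)\<in>(E - Z) O converse R"
    then obtain w where w: "(x,w)\<in>E" "(x,w)\<notin>Z" "(y,w)\<in>R" by blast
    have "(w,\<alpha> x)\<in>le" using Z_mem[OF w(1)] w(2) by blast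
    then show "(y,\<alpha> x)\<in>R" using UpD[OF r w(3) _ ] le_refl E_X e by blast
  next
    assume "(y,\<alpha> x)\<in>R"
    moreover have "(x,\<alpha> x)\<in>E" using al_E[OF x] .
    moreover have "(x,\<alpha> x)\<notin>Z" using Z_mem[OF al_E[OF x]] le_refl al_X[OF x] by blast
    ultimately show "(x,y)\<in>(E - Z) O converse R" by blast
  qed
  then show ?thesis using e unfolding mn_def rdivE_def relc_def by blast
qed

lemma tn_mem: "R \<in> U \<Longrightarrow> (x,y)\<in>E \<Longrightarrow> (x,y) \<in> tn R \<longleftrightarrow>
   \<not>(\<exists>z. (z,x)\<in>R \<and> (z,y)\<in>E \<and> (y,\<alpha> z)\<in>le)"
proof -
  assume r: "R \<in> U" and e: "(x,y)\<in>E"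
  have "(x,y)\<in>converse R O (E - Z) \<longleftrightarrow> (\<exists>z. (z,x)\<in>R \<and> (z,y)\<in>E \<and> (y,\<alpha> z)\<in>le)"
    using Z_mem by blast
  then show ?thesis using e unfolding tn_def ldivE_def relc_def by blast
qed

lemma tn_sub: "tn R \<subseteq> E" unfolding tn_def ldivE_def relc_def by blast
lemma mn_sub: "mn R \<subseteq> E" unfolding mn_def rdivE_def relc_def by blast

lemma tn_mn: assumes r: "R \<in> U" shows "tn (mn R) = R"
proof (rule set_eqI)
  fix p :: "'a \<times> 'a"
  obtain x y where p: "p = (x,y)" by (cases p)
  show "p \<in> tn (mn R) \<longleftrightarrow> p \<in> R"
  proof (cases "(x,y)\<in>E")
    case False then show ?thesis using p tn_sub Up_sub[OF r] by blast
  next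
    case e: True
    have y: "y\<in>X" and x: "x\<in>X" using e E_X by auto
    have "(x,y) \<in> tn (mn R) \<longleftrightarrow> \<not>(\<exists>z. (z,x)\<in>E \<and> (x,\<alpha> z)\<notin>R \<and> (z,y)\<in>E \<and> (y,\<alpha> z)\<in>le)"
      using tn_mem[OF mn_Up[OF r] e] mn_mem[OF r] mn_sub by blast
    also have "\<dots> \<longleftrightarrow> (x,y)\<in>R"
    proof
      assume h: "\<not>(\<exists>z. (z,x)\<in>E \<and> (x,\<alpha> z)\<notin>R \<and> (z,y)\<in>E \<and> (y,\<alpha> z)\<in>le)"
      obtain z where z: "z\<in>X" "\<alpha> z = y" using al_surj[OF y] by blast
      have zy: "(z,y)\<in>E" using al_E[OF z(1)] z by simp
      have "(z,x)\<in>E" using zy e E_sym E_trans by blast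
      then show "(x,y)\<in>R" using h zy z le_refl[OF y] by blast
    next
      assume "(x,y)\<in>R"
      then show "\<not>(\<exists>z. (z,x)\<in>E \<and> (x,\<alpha> z)\<notin>R \<and> (z,y)\<in>E \<and> (y,\<alpha> z)\<in>le)"
        using UpD[OF r] le_refl[OF x] by blast
    qed
    finally show ?thesis using p by simp
  qed
qed

lemma mn_tn: assumes r: "R \<in> U" shows "mn (tn R) = R"
proof (rule set_eqI)
  fix p :: "'a \<times> 'a"
  obtain x y where p: "p = (x,y)" by (cases p)
  show "p \<in> mn (tn R) \<longleftrightarrow> p \<in> R"
  proof (cases "(x,y)\<in>E")
    case False then show ?thesis using p mn_sub Up_sub[OF r] by blast
  next
    case e: True
    have y: "y\<in>X" and x: "x\<in>X" using e E_X by auto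
    have yax: "(y,\<alpha> x)\<in>E" using e al_E[OF x] E_sym E_trans by blast
    have "(x,y) \<in> mn (tn R) \<longleftrightarrow> (\<exists>z. (z,y)\<in>R \<and> (z,\<alpha> x)\<in>E \<and> (\<alpha> x,\<alpha> z)\<in>le)"
      using mn_mem[OF tn_Up[OF r] e] tn_mem[OF r yax] by blast
    also have "\<dots> \<longleftrightarrow> (x,y)\<in>R"
    proof
      assume "\<exists>z. (z,y)\<in>R \<and> (z,\<alpha> x)\<in>E \<and> (\<alpha> x,\<alpha> z)\<in>le"
      then obtain z where z: "(z,y)\<in>R" "(z,\<alpha> x)\<in>E" "(\<alpha> x,\<alpha> z)\<in>le" by blast
      have "z\<in>X" using z E_X by blast
      then have "(x,z)\<in>le" using al_mono[OF x] z by blast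
      then show "(x,y)\<in>R" using UpD[OF r z(1)] le_refl[OF y] by blast
    next
      assume "(x,y)\<in>R"
      then show "\<exists>z. (z,y)\<in>R \<and> (z,\<alpha> x)\<in>E \<and> (\<alpha> x,\<alpha> z)\<in>le"
        using al_E[OF x] le_refl[OF al_X[OF x]] by blast
    qed
    finally show ?thesis using p by simp
  qed
qed

lemma E_al: "(x,y)\<in>E \<Longrightarrow> (\<alpha> x,\<alpha> y)\<in>E"
  using E_X al_E E_sym E_trans by meson

lemma mnmn_mem: "R \<in> U \<Longrightarrow> (x,y)\<in>E \<Longrightarrow> (x,y) \<in> mn (mn R) \<longleftrightarrow> (\<alpha> x,\<alpha> y)\<in>R"
proof -
  assume r: "R \<in> U" and e: "(x,y)\<in>E"
  have x: "x\<in>X" using e E_X by blast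
  have yax: "(y,\<alpha> x)\<in>E" using e al_E[OF x] E_sym E_trans by blast
  have "(x,y) \<in> mn (mn R) \<longleftrightarrow> (y,\<alpha> x)\<notin>mn R" using mn_mem[OF mn_Up[OF r] e] .
  also have "\<dots> \<longleftrightarrow> (\<alpha> x,\<alpha> y)\<in>R" using mn_mem[OF r yax] by blast
  finally show ?thesis .
qed

lemma alpow_X: "x\<in>X \<Longrightarrow> (\<alpha>^^m) x \<in> X"
  by (induction m) (auto simp: al_X)
lemma alpow_E: "(x,y)\<in>E \<Longrightarrow> ((\<alpha>^^m) x, (\<alpha>^^m) y)\<in>E"
  by (induction m) (auto simp: E_al)

lemma mn_pow_Up: "R \<in> U \<Longrightarrow> (mn^^k) R \<in> U"
  by (induction k) (auto simp: mn_Up)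
lemma tn_pow_Up: "R \<in> U \<Longrightarrow> (tn^^k) R \<in> U"
  by (induction k) (auto simp: tn_Up)

lemma mn_pow2: "R \<in> U \<Longrightarrow> (mn^^(2*m)) R = {(x,y)\<in>E. ((\<alpha>^^m) x, (\<alpha>^^m) y)\<in>R}"
proof (induction m)
  case 0 then show ?case using Up_sub by auto
next
  case (Suc m)
  have eq: "(mn^^(2*Suc m)) R = mn (mn ((mn^^(2*m)) R))" by simp
  show ?case
  proof (rule set_eqI)
    fix p :: "'a \<times> 'a"
    obtain x y where p: "p = (x,y)" by (cases p)
    show "p \<in> (mn^^(2*Suc m)) R \<longleftrightarrow> p \<in> {(x,y)\<in>E. ((\<alpha>^^Suc m) x, (\<alpha>^^Suc m) y)\<in>R}"
    proof (cases "(x,y)\<in>E")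
      case False then show ?thesis using p eq mn_sub by auto
    next
      case True
      have "p \<in> (mn^^(2*Suc m)) R \<longleftrightarrow> (\<alpha> x, \<alpha> y) \<in> (mn^^(2*m)) R"
        using p eq mnmn_mem[OF mn_pow_Up[OF Suc.prems] True] by simp
      also have "\<dots> \<longleftrightarrow> ((\<alpha>^^m) (\<alpha> x), (\<alpha>^^m) (\<alpha> y))\<in>R"
        using Suc.IH[OF Suc.prems] E_al[OF True] by simp
      also have "\<dots> \<longleftrightarrow> p \<in> {(x,y)\<in>E. ((\<alpha>^^Suc m) x, (\<alpha>^^Suc m) y)\<in>R}"
        using p True by (simp add: funpow_Suc_right del: funpow.simps)
      finally show ?thesis .
    qed
  qed
qed

lemma tn_mn_pow: "R \<in> U \<Longrightarrow> (tn^^k) ((mn^^k) R) = R"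
proof (induction k arbitrary: R)
  case 0 then show ?case by simp
next
  case (Suc k)
  have a: "(mn^^Suc k) R = mn ((mn^^k) R)" by simp
  have b: "\<And>S. (tn^^Suc k) S = (tn^^k) (tn S)" by (simp add: funpow_Suc_right del: funpow.simps)
  have "(tn^^Suc k) ((mn^^Suc k) R) = (tn^^k) (tn (mn ((mn^^k) R)))"
    by (simp only: a b)
  also have "\<dots> = R" using tn_mn[OF mn_pow_Up[OF Suc.prems]] Suc by simp
  finally show ?case .
qed

lemma mn_tn_pow: "R \<in> U \<Longrightarrow> (mn^^k) ((tn^^k) R) = R"
proof (induction k arbitrary: R)
  case 0 then show ?case by simp
next
  case (Suc k)
  have a: "(tn^^Suc k) R = tn ((tn^^k) R)" by simp
  have b: "\<And>S. (mn^^Suc k) S = (mn^^k) (mn S)" by (simp add: funpow_Suc_right del: funpow.simps)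
  have "(mn^^Suc k) ((tn^^Suc k) R) = (mn^^k) (mn (tn ((tn^^k) R)))"
    by (simp only: a b)
  also have "\<dots> = R" using mn_tn[OF tn_pow_Up[OF Suc.prems]] Suc by simp
  finally show ?case .
qed

lemma per_iff1: "(\<forall>a\<in>U. (tn^^n) a = (mn^^n) a) \<longleftrightarrow> (\<forall>a\<in>U. (mn^^(2*n)) a = a)"
proof
  assume h: "\<forall>a\<in>U. (tn^^n) a = (mn^^n) a"
  show "\<forall>a\<in>U. (mn^^(2*n)) a = a"
  proof
    fix a assume a: "a \<in> U"
    have "(mn^^(2*n)) a = (mn^^n) ((mn^^n) a)" by (simp add: funpow_add mult_2)
    also have "\<dots> = (mn^^n) ((tn^^n) a)" using h a by simp
    also have "\<dots> = a" using mn_tn_pow[OF a] .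
    finally show "(mn^^(2*n)) a = a" .
  qed
next
  assume h: "\<forall>a\<in>U. (mn^^(2*n)) a = a"
  show "\<forall>a\<in>U. (tn^^n) a = (mn^^n) a"
  proof
    fix a assume a: "a \<in> U"
    have "(tn^^n) a = (mn^^(2*n)) ((tn^^n) a)" using h tn_pow_Up[OF a] by simp
    also have "\<dots> = (mn^^n) ((mn^^n) ((tn^^n) a))" by (simp add: funpow_add mult_2)
    also have "\<dots> = (mn^^n) a" using mn_tn_pow[OF a] by simp
    finally show "(tn^^n) a = (mn^^n) a" .
  qed
qed

lemma per_iff2: "(\<forall>a\<in>U. (mn^^(2*n)) a = a) \<longleftrightarrow> (\<forall>x\<in>X. (\<alpha>^^n) x = x)"
proof
  assume h: "\<forall>a\<in>U. (mn^^(2*n)) a = a"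
  show "\<forall>x\<in>X. (\<alpha>^^n) x = x"
  proof
    fix x assume x: "x\<in>X"
    define P where "P = {(u,v)\<in>E. (u,x)\<in>le \<and> (x,v)\<in>le}"
    have PU: "P \<in> U" unfolding P_def
    proof (rule UpI)
      show "{(u,v)\<in>E. (u,x)\<in>le \<and> (x,v)\<in>le} \<subseteq> E" by blast
      fix u v x' y assume "(u,v)\<in>{(u,v)\<in>E. (u,x)\<in>le \<and> (x,v)\<in>le}" "(x',u)\<in>le" "(v,y)\<in>le"
      then show "(x',y)\<in>{(u,v)\<in>E. (u,x)\<in>le \<and> (x,v)\<in>le}"
        using le_trans le_E E_trans by blast
    qed
    have xP: "(x,x)\<in>P" unfolding P_def using E_refl[OF x] le_refl[OF x] by blast
    have "(x,x) \<in> (mn^^(2*n)) P" using h PU xP by simp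
    then have "((\<alpha>^^n) x, (\<alpha>^^n) x)\<in>P" using mn_pow2[OF PU] by simp
    then show "(\<alpha>^^n) x = x" unfolding P_def using le_antisym by blast
  qed
next
  assume h: "\<forall>x\<in>X. (\<alpha>^^n) x = x"
  show "\<forall>a\<in>U. (mn^^(2*n)) a = a"
  proof
    fix a assume a: "a\<in>U"
    show "(mn^^(2*n)) a = a" unfolding mn_pow2[OF a]
      using h Up_sub[OF a] E_X by fastforce
  qed
qed

lemma graph_id: "graph_on X f = Id_on X \<longleftrightarrow> (\<forall>x\<in>X. f x = x)"
proof
  assume "graph_on X f = Id_on X"
  then show "\<forall>x\<in>X. f x = x" unfolding graph_on_def Id_on_def by (auto simp: set_eq_iff)
next
  assume "\<forall>x\<in>X. f x = x"
  then show "graph_on X f = Id_on X" unfolding graph_on_def Id_on_def by force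
qed

lemma per_iff: "(\<forall>a\<in>U. ((\<lambda>x. ldivE E x Z) ^^ n) a = ((\<lambda>x. rdivE E Z x) ^^ n) a)
    \<longleftrightarrow> graph_on X (\<alpha> ^^ n) = Id_on X"
proof -
  have 1: "(\<lambda>x. ldivE E x Z) = tn" by (rule ext) (simp add: tn_def)
  have 2: "(\<lambda>x. rdivE E Z x) = mn" by (rule ext) (simp add: mn_def)
  show ?thesis unfolding 1 2 per_iff1 per_iff2 graph_id ..
qed


lemma Int_Up: "R \<in> U \<Longrightarrow> S \<in> U \<Longrightarrow> R \<inter> S \<in> U" unfolding UpE_def by blast
lemma Un_Up: "R \<in> U \<Longrightarrow> S \<in> U \<Longrightarrow> R \<union> S \<in> U" unfolding UpE_def by blast

lemma fl: "fl_algebra U (\<inter>) (\<union>) (O) le Z (ldivE E) (rdivE E)"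
  unfolding fl_algebra_def
  using le_Up Z_Up Int_Up Un_Up comp_Up ldiv_Up rdiv_Up le_comp comp_le
    res_l res_r Up_sub O_assoc
  by (simp add: Int_ac Un_ac) blast

lemma infl: "infl_algebra U (\<inter>) (\<union>) (O) le Z (ldivE E) (rdivE E)"
  unfolding infl_algebra_def using fl tn_mn mn_tn unfolding tn_def mn_def by blast

end

theorem theorem3p12:
  fixes X :: "'a set" and le E :: "('a \<times> 'a) set" and \<alpha> :: "'a \<Rightarrow> 'a"
  assumes poset: "partial_order_on X le"
    and eqv: "equiv X E"
    and leE: "le \<subseteq> E"
    and aut: "order_automorphism X le \<alpha>"
    and alphaE: "graph_on X \<alpha> \<subseteq> E"
  shows "(graph_on X \<alpha> O converse (relc E le) = converse (relc E le) O graph_on X \<alpha> \<longrightarrow>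
           infl_algebra (UpE le E) (\<inter>) (\<union>) (O) le (graph_on X \<alpha> O converse (relc E le))
             (ldivE E) (rdivE E) \<and>
           distributive_on (UpE le E) (\<inter>) (\<union>))
       \<and> (\<forall>n::nat. 0 < n \<longrightarrow>
           (graph_on X \<alpha> O converse (relc E le) = converse (relc E le) O graph_on X \<alpha> \<longrightarrow>
             (n_periodic (UpE le E) (graph_on X \<alpha> O converse (relc E le)) (ldivE E) (rdivE E) n
              \<longleftrightarrow> perm_order_is X \<alpha> n)))"
proof -
  interpret stp X le E \<alpha> using assms by (unfold_locales) auto
  have d: "distributive_on (UpE le E) (\<inter>) (\<union>)" unfolding distributive_on_def by blast
  have p: "n_periodic (UpE le E) (graph_on X \<alpha> O converse (relc E le)) (ldivE E) (rdivE E) n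
              \<longleftrightarrow> perm_order_is X \<alpha> n" for n
    unfolding n_periodic_def perm_order_is_def per_iff ..
  show ?thesis using infl d p by blast
qed

end
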